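(* Let $a$ be a positive integer. If there exists a Hadamard matrix of order $4a$, then there exists a $(4a-2)$--$\mathrm{MOFR}(4,2a;2)$.
   Context: A Hadamard matrix of order $N$ is an $N\times N$ matrix $H$ with entries in $\{1,-1\}$ satisfying $HH^T=NI_N$. A frequency rectangle of type $\mathrm{FR}(m,n;q)$ is an $m\times n$ array on a symbol set of size $q$ in which each symbol appears exactly $n/q$ times in each row and $m/q$ times in each column. Two frequency rectangles of the same type are orthogonal if upon superimposition each ordered pair of symbols appears the same number of times. A $k$--$\mathrm{MOFR}(m,n;q)$ is a set of $k$ pairwise orthogonal frequency rectangles of type $\mathrm{FR}(m,n;q)$. *)

theory Defs
  imports Main
begin

definition hadamard :: "nat \<Rightarrow> (nat \<Rightarrow> nat \<Rightarrow> int) \<Rightarrow> bool" where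
  "hadamard N H \<longleftrightarrow>
     (\<forall>i<N. \<forall>j<N. H i j = 1 \<or> H i j = -1) \<and>
     (\<forall>i<N. \<forall>k<N. (\<Sum>j<N. H i j * H k j) = (if i = k then int N else 0))"

definition freq_rect :: "nat \<Rightarrow> nat \<Rightarrow> nat \<Rightarrow> (nat \<Rightarrow> nat \<Rightarrow> nat) \<Rightarrow> bool" where
  "freq_rect m n q F \<longleftrightarrow>
     (\<forall>i<m. \<forall>j<n. F i j < q) \<and>
     (\<forall>i<m. \<forall>s<q. q * card {j. j < n \<and> F i j = s} = n) \<and>
     (\<forall>j<n. \<forall>s<q. q * card {i. i < m \<and> F i j = s} = m)"

definition orth_fr :: "nat \<Rightarrow> nat \<Rightarrow> nat \<Rightarrow> (nat \<Rightarrow> nat \<Rightarrow> nat) \<Rightarrow> (nat \<Rightarrow> nat \<Rightarrow> nat) \<Rightarrow> bool" where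
  "orth_fr m n q F G \<longleftrightarrow>
     (\<exists>c. \<forall>s<q. \<forall>t<q. card {(i, j). i < m \<and> j < n \<and> F i j = s \<and> G i j = t} = c)"

definition MOFR :: "nat \<Rightarrow> nat \<Rightarrow> nat \<Rightarrow> nat \<Rightarrow> (nat \<Rightarrow> nat \<Rightarrow> nat \<Rightarrow> nat) \<Rightarrow> bool" where
  "MOFR k m n q F \<longleftrightarrow>
     (\<forall>r<k. freq_rect m n q (F r)) \<and>
     (\<forall>r<k. \<forall>r'<k. r \<noteq> r' \<longrightarrow> orth_fr m n q (F r) (F r'))"

end

theory Submission imports Defs begin

lemma cnt2:
  fixes f g :: "'a \<Rightarrow> int"
  assumes "finite A" "\<forall>k\<in>A. f k = 1 \<or> f k = -1" "\<forall>k\<in>A. g k = 1 \<or> g k = -1"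
    and "s = 1 \<or> s = -1" "t = 1 \<or> t = -1"
  shows "4 * int (card {k\<in>A. f k = s \<and> g k = t}) =
     int (card A) + s * sum f A + t * sum g A + s * t * (\<Sum>k\<in>A. f k * g k)"
proof -
  have "(\<Sum>k\<in>A. (1 + s * f k) * (1 + t * g k)) = (\<Sum>k\<in>A. if f k = s \<and> g k = t then 4 else 0)"
    apply (rule sum.cong[OF refl])
    using assms(2-5) by (auto simp: algebra_simps)
  also have "\<dots> = 4 * int (card {k\<in>A. f k = s \<and> g k = t})"
    using assms(1) by (simp add: sum.If_cases Int_def)
  finally have e: "(\<Sum>k\<in>A. (1 + s * f k) * (1 + t * g k)) = 4 * int (card {k\<in>A. f k = s \<and> g k = t})" .
  have "(\<Sum>k\<in>A. (1 + s * f k) * (1 + t * g k)) = (\<Sum>k\<in>A. 1 + s * f k + t * g k + s * t * (f k * g k))"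
    by (rule sum.cong) (auto simp: algebra_simps)
  also have "\<dots> = int (card A) + s * sum f A + t * sum g A + s * t * (\<Sum>k\<in>A. f k * g k)"
    by (simp add: sum.distrib sum_distrib_left)
  finally show ?thesis using e by simp
qed

lemma col:
  fixes G :: "nat \<Rightarrow> nat"
  assumes "x \<le> 1" "y \<le> 1" "s < 2" "G 0 = x" "G 1 = y" "G 2 = 1 - x" "G 3 = 1 - y"
  shows "card {i. i < 4 \<and> G i = s} = 2"
proof -
  have u: "[0..<4] = [0,1,2,3::nat]" by (simp add: eval_nat_numeral upt_rec)
  have e: "{i. i < 4 \<and> G i = s} = set (filter (\<lambda>i. G i = s) [0,1,2,3])"
    unfolding u[symmetric] by auto
  have "card {i. i < 4 \<and> G i = s} = length (filter (\<lambda>i. G i = s) [0,1,2,3])"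
    unfolding e by (rule distinct_card) simp
  also have "\<dots> = 2"
  proof -
    have "x = 0 \<or> x = 1" "y = 0 \<or> y = 1" "s = 0 \<or> s = 1" using assms(1-3) by auto
    then show ?thesis using assms(4-7) by auto
  qed
  finally show ?thesis .
qed


definition gg :: "(nat \<Rightarrow> nat \<Rightarrow> int) \<Rightarrow> nat \<Rightarrow> nat \<Rightarrow> int" where
  "gg H r k = H r k * H 0 k"

definition bitf :: "(nat \<Rightarrow> nat \<Rightarrow> int) \<Rightarrow> nat \<Rightarrow> nat \<Rightarrow> nat" where
  "bitf H r k = (if gg H r k = 1 then 1 else 0)"

lemma gg_pm:
  assumes "hadamard N H" "r < N" "k < N"
  shows "gg H r k = 1 \<or> gg H r k = -1"
proof -
  have "H r k = 1 \<or> H r k = -1" "H 0 k = 1 \<or> H 0 k = -1"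
    using assms unfolding hadamard_def by auto
  then show ?thesis unfolding gg_def by auto
qed

lemma gg_sum:
  assumes "hadamard N H" "0 < r" "r < N"
  shows "sum (gg H r) {..<N} = 0"
  using assms unfolding hadamard_def gg_def by auto

lemma gg_sum2:
  assumes "hadamard N H" "r < N" "r' < N" "r \<noteq> r'"
  shows "(\<Sum>k<N. gg H r k * gg H r' k) = 0"
proof -
  have "(\<Sum>k<N. gg H r k * gg H r' k) = (\<Sum>k<N. H r k * H r' k)"
  proof (rule sum.cong[OF refl])
    fix k assume "k \<in> {..<N}"
    then have "H 0 k = 1 \<or> H 0 k = -1" using assms unfolding hadamard_def by auto
    then show "gg H r k * gg H r' k = H r k * H r' k" unfolding gg_def by auto
  qed
  also have "\<dots> = 0" using assms unfolding hadamard_def by auto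
  finally show ?thesis .
qed

lemma gg_count:
  assumes "hadamard (4*a) H" "0 < r" "0 < r'" "r < 4*a" "r' < 4*a" "r \<noteq> r'"
    "s = 1 \<or> s = -1" "t = 1 \<or> t = -1"
  shows "card {k. k < 4*a \<and> gg H r k = s \<and> gg H r' k = t} = a"
proof -
  have "4 * int (card {k\<in>{..<4*a}. gg H r k = s \<and> gg H r' k = t}) =
     int (card {..<4*a}) + s * sum (gg H r) {..<4*a} + t * sum (gg H r') {..<4*a}
       + s * t * (\<Sum>k\<in>{..<4*a}. gg H r k * gg H r' k)"
    by (rule cnt2) (use assms gg_pm in auto)
  also have "\<dots> = 4 * int a"
    using gg_sum[OF assms(1,2,4)] gg_sum[OF assms(1,3,5)] gg_sum2[OF assms(1,4,5,6)] by simp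
  finally have "card {k\<in>{..<4*a}. gg H r k = s \<and> gg H r' k = t} = a" by simp
  moreover have "{k\<in>{..<4*a}. gg H r k = s \<and> gg H r' k = t} = {k. k < 4*a \<and> gg H r k = s \<and> gg H r' k = t}" by auto
  ultimately show ?thesis by simp
qed

lemma gg_count1:
  assumes "hadamard (4*a) H" "0 < r" "r < 4*a" "s = 1 \<or> s = -1"
  shows "card {k. k < 4*a \<and> gg H r k = s} = 2*a"
proof -
  have "4 * int (card {k\<in>{..<4*a}. gg H r k = s \<and> gg H r k = s}) =
     int (card {..<4*a}) + s * sum (gg H r) {..<4*a} + s * sum (gg H r) {..<4*a}
       + s * s * (\<Sum>k\<in>{..<4*a}. gg H r k * gg H r k)"
    by (rule cnt2) (use assms gg_pm in auto)
  also have "(\<Sum>k\<in>{..<4*a}. gg H r k * gg H r k) = (\<Sum>k\<in>{..<4*a}. 1)"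
    by (rule sum.cong[OF refl]) (use assms gg_pm in fastforce)
  finally have "4 * int (card {k\<in>{..<4*a}. gg H r k = s}) =
     int (4*a) + 2 * s * sum (gg H r) {..<4*a} + s * s * int (4 * a)" by simp
  moreover have "s * s = 1" using assms(4) by auto
  moreover have "sum (gg H r) {..<4*a} = 0" using gg_sum[OF assms(1-3)] .
  ultimately have "card {k\<in>{..<4*a}. gg H r k = s} = 2 * a" by simp
  moreover have "{k\<in>{..<4*a}. gg H r k = s} = {k. k < 4*a \<and> gg H r k = s}" by auto
  ultimately show ?thesis by simp
qed

lemma transfer_card:
  assumes "bij_betw p {..<m} S"
  shows "card {j. j < m \<and> R (p j)} = card {k\<in>S. R k}"
proof -
  have "{k\<in>S. R k} = p ` {j. j < m \<and> R (p j)}"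
    using assms unfolding bij_betw_def by auto
  moreover have "inj_on p {j. j < m \<and> R (p j)}"
    using assms unfolding bij_betw_def by (auto intro: inj_on_subset)
  ultimately show ?thesis by (simp add: card_image)
qed

lemma sum4: "(\<Sum>i<(4::nat). f i) = f 0 + f 1 + f 2 + (f 3 :: nat)"
  by (simp add: eval_nat_numeral)

lemma one_minus_bit: "c \<le> 1 \<Longrightarrow> (1 - bitf H R k = c) = (bitf H R k = 1 - c)"
  by (auto simp: bitf_def)


theorem mainTheorem4:
  fixes a :: nat
  assumes "a > 0"
    and "\<exists>H. hadamard (4 * a) H"
  shows "\<exists>F. MOFR (4 * a - 2) 4 (2 * a) 2 F"
proof -
  obtain H where H: "hadamard (4*a) H" using assms(2) by blast
  define P where "P = {k. k < 4*a \<and> gg H 1 k = 1}"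
  define Q where "Q = {k. k < 4*a \<and> gg H 1 k = -1}"
  have cP: "card P = card {..<2*a}" unfolding P_def using gg_count1[OF H, of 1 1] assms(1) by simp
  have cQ: "card Q = card {..<2*a}" unfolding Q_def using gg_count1[OF H, of 1 "-1"] assms(1) by simp
  obtain p where p: "bij_betw p {..<2*a} P"
    using finite_same_card_bij[of "{..<2*a}" P] cP by (auto simp: P_def)
  obtain q where q: "bij_betw q {..<2*a} Q"
    using finite_same_card_bij[of "{..<2*a}" Q] cQ by (auto simp: Q_def)
  define F :: "nat \<Rightarrow> nat \<Rightarrow> nat \<Rightarrow> nat" where "F r i j = (if i < 2 then bitf H (r+2) (if i = 0 \<or> i = 2 then p j else q j)
      else 1 - bitf H (r+2) (if i = 0 \<or> i = 2 then p j else q j))" for r i j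
  define sg :: "nat \<Rightarrow> int" where "sg c = (if c = 1 then 1 else -1)" for c
  have bit_sg: "bitf H R k = c \<longleftrightarrow> gg H R k = sg c" if "R < 4*a" "k < 4*a" "c \<le> 1" for R k c
    using gg_pm[OF H that(1,2)] that(3) unfolding bitf_def sg_def by auto
  have sg_pm: "sg c = 1 \<or> sg c = -1" for c unfolding sg_def by auto
  have PQ: "card {k\<in>P. B k} + card {k\<in>Q. B k} = card {k. k < 4*a \<and> B k}" for B
  proof -
    have "{k. k < 4*a \<and> B k} = {k\<in>P. B k} \<union> {k\<in>Q. B k}"
      unfolding P_def Q_def using gg_pm[OF H, of 1] assms(1) by auto
    moreover have "{k\<in>P. B k} \<inter> {k\<in>Q. B k} = {}" unfolding P_def Q_def by auto
    ultimately show ?thesis by (simp add: card_Un_disjoint P_def Q_def)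
  qed
  have cntP: "card {k\<in>P. bitf H R k = c} = a" if "2 \<le> R" "R < 4*a" "c \<le> 1" for R c
  proof -
    have "{k\<in>P. bitf H R k = c} = {k. k < 4*a \<and> gg H R k = sg c \<and> gg H 1 k = 1}"
      unfolding P_def using bit_sg[OF that(2) _ that(3)] by auto
    then show ?thesis using gg_count[OF H, of R 1 "sg c" 1] that sg_pm by simp
  qed
  have cntQ: "card {k\<in>Q. bitf H R k = c} = a" if "2 \<le> R" "R < 4*a" "c \<le> 1" for R c
  proof -
    have "{k\<in>Q. bitf H R k = c} = {k. k < 4*a \<and> gg H R k = sg c \<and> gg H 1 k = -1}"
      unfolding Q_def using bit_sg[OF that(2) _ that(3)] by auto
    then show ?thesis using gg_count[OF H, of R 1 "sg c" "-1"] that sg_pm by simp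
  qed
  have cntA: "card {k. k < 4*a \<and> bitf H R k = c \<and> bitf H R' k = d} = a"
    if "2 \<le> R" "R < 4*a" "2 \<le> R'" "R' < 4*a" "R \<noteq> R'" "c \<le> 1" "d \<le> 1" for R R' c d
  proof -
    have "{k. k < 4*a \<and> bitf H R k = c \<and> bitf H R' k = d} = {k. k < 4*a \<and> gg H R k = sg c \<and> gg H R' k = sg d}"
      using bit_sg[OF that(2) _ that(6)] bit_sg[OF that(4) _ that(7)] by auto
    then show ?thesis using gg_count[OF H, of R R' "sg c" "sg d"] that sg_pm by simp
  qed
  have pj: "p j \<in> P" "q j \<in> Q" if "j < 2*a" for j
    using p q that unfolding bij_betw_def by auto
  have bitle: "bitf H R k \<le> 1" for R k unfolding bitf_def by auto
  have FR: "freq_rect 4 (2*a) 2 (F r)" if "r < 4*a - 2" for r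
  proof -
    let ?R = "r + 2"
    have R: "2 \<le> ?R" "?R < 4*a" using that by auto
    have rows: "2 * card {j. j < 2*a \<and> F r i j = s} = 2*a" if "i < 4" "s < 2" for i s
    proof -
      have s1: "s \<le> 1" "1 - s \<le> 1" using that by auto
      have "i = 0 \<or> i = 1 \<or> i = 2 \<or> i = 3" using that by auto
      then have "card {j. j < 2*a \<and> F r i j = s} = a"
      proof (elim disjE)
        assume "i = 0"
        then show ?thesis unfolding F_def using transfer_card[OF p, of "\<lambda>k. bitf H ?R k = s"]
            cntP[OF R s1(1)] by simp
      next
        assume "i = 1"
        then show ?thesis unfolding F_def using transfer_card[OF q, of "\<lambda>k. bitf H ?R k = s"]
            cntQ[OF R s1(1)] by simp
      next
        assume "i = 2"
        then show ?thesis unfolding F_def using transfer_card[OF p, of "\<lambda>k. bitf H ?R k = 1 - s"]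
            cntP[OF R s1(2)] one_minus_bit[OF s1(1)] by simp
      next
        assume "i = 3"
        then show ?thesis unfolding F_def using transfer_card[OF q, of "\<lambda>k. bitf H ?R k = 1 - s"]
            cntQ[OF R s1(2)] one_minus_bit[OF s1(1)] by simp
      qed
      then show ?thesis by simp
    qed
    have cols: "2 * card {i. i < 4 \<and> F r i j = s} = 4" if "j < 2*a" "s < 2" for j s
      using col[of "bitf H ?R (p j)" "bitf H ?R (q j)" s "\<lambda>i. F r i j"] that bitle
      unfolding F_def by simp
    have vals: "F r i j < 2" for i j
      unfolding F_def bitf_def by simp
    show ?thesis unfolding freq_rect_def using rows cols vals by blast
  qed
  have ORTH: "orth_fr 4 (2*a) 2 (F r) (F r')" if "r < 4*a - 2" "r' < 4*a - 2" "r \<noteq> r'" for r r'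
  proof -
    let ?R = "r + 2" and ?R' = "r' + 2"
    have R: "2 \<le> ?R" "?R < 4*a" "2 \<le> ?R'" "?R' < 4*a" "?R \<noteq> ?R'" using that by auto
    have "card {(i, j). i < 4 \<and> j < 2*a \<and> F r i j = s \<and> F r' i j = t} = 2*a"
      if "s < 2" "t < 2" for s t
    proof -
      have s1: "s \<le> 1" "1 - s \<le> 1" "t \<le> 1" "1 - t \<le> 1" using that by auto
      let ?B = "\<lambda>i. {j. j < 2*a \<and> F r i j = s \<and> F r' i j = t}"
      have e: "{(i, j). i < 4 \<and> j < 2*a \<and> F r i j = s \<and> F r' i j = t} = Sigma {..<4} ?B"
        by auto
      have "card (Sigma {..<4} ?B) = (\<Sum>i<4. card (?B i))"
        by (rule card_SigmaI) auto
      also have "\<dots> = card (?B 0) + card (?B 1) + card (?B 2) + card (?B 3)"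
        by (rule sum4)
      also have "card (?B 0) = card {k\<in>P. bitf H ?R k = s \<and> bitf H ?R' k = t}"
        unfolding F_def using transfer_card[OF p, of "\<lambda>k. bitf H ?R k = s \<and> bitf H ?R' k = t"] by simp
      also have "card (?B 1) = card {k\<in>Q. bitf H ?R k = s \<and> bitf H ?R' k = t}"
        unfolding F_def using transfer_card[OF q, of "\<lambda>k. bitf H ?R k = s \<and> bitf H ?R' k = t"] by simp
      also have "card (?B 2) = card {k\<in>P. bitf H ?R k = 1 - s \<and> bitf H ?R' k = 1 - t}"
        unfolding F_def using transfer_card[OF p, of "\<lambda>k. bitf H ?R k = 1 - s \<and> bitf H ?R' k = 1 - t"]
          one_minus_bit[OF s1(1)] one_minus_bit[OF s1(3)] by simp
      also have "card (?B 3) = card {k\<in>Q. bitf H ?R k = 1 - s \<and> bitf H ?R' k = 1 - t}"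
        unfolding F_def using transfer_card[OF q, of "\<lambda>k. bitf H ?R k = 1 - s \<and> bitf H ?R' k = 1 - t"]
          one_minus_bit[OF s1(1)] one_minus_bit[OF s1(3)] by simp
      finally have "card (Sigma {..<4} ?B) = a + a"
        using PQ[of "\<lambda>k. bitf H ?R k = s \<and> bitf H ?R' k = t"]
          PQ[of "\<lambda>k. bitf H ?R k = 1 - s \<and> bitf H ?R' k = 1 - t"]
          cntA[OF R s1(1,3)] cntA[OF R s1(2,4)] by simp
      then show ?thesis unfolding e by simp
    qed
    then show ?thesis unfolding orth_fr_def by blast
  qed
  have "MOFR (4 * a - 2) 4 (2 * a) 2 F" unfolding MOFR_def using FR ORTH by blast
  then show ?thesis by blast
qed

end
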